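(* Let $n,k$ be integers with $1<k<n-1$ and let $\mathcal{P}_{k,n}=\{x\in[0,1]^n:\sum_{i=1}^n x_i=k\}$. There is no strong Bernoulli factory for $\mathcal{P}_{k,n}$ that converges exponentially.
   Context: A Bernoulli factory with output set $V$ (for inputs $x\in[0,1]^n$) is a (possibly infinite) rooted binary tree whose internal nodes are labeled by an index $i\in[n]$ or a known constant $c\in(0,1)$ and whose leaves are labeled by elements of $V$; on input $x$ one walks from the root, at a node labeled $i$ flipping a fresh independent coin that is $1$ with probability $x_i$, at a node labeled $c$ a fresh coin of bias $c$, following the edge labeled by the outcome, and outputs the label of the leaf reached; $\mathcal{F}(x)$ is the output ($\emptyset$ if no leaf is reached). For a polytope $\mathcal{P}$ with vertex set $V$, a strong Bernoulli factory for $\mathcal{P}$ is such a factory with output set $V$ that terminates almost surely and satisfies $\mathbb{E}[\mathcal{F}(x)]=x$ for all $x\in\mathcal{P}$. Let $T_{\mathcal{F}}(x)$ be the depth of the leaf at which the execution of $\mathcal{F}$ on input $x$ terminates ($\infty$ if it does not terminate). $\mathcal{F}$ converges exponentially on a domain $S$ (here $S=\mathcal{P}_{k,n}$) if there is a constant $c<1$ with $\Pr[T_{\mathcal{F}}(x)>d]\le c^d$ for all positive integers $d$ and all $x\in S$. *)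

theory Defs
  imports "HOL-Analysis.Analysis"
begin

datatype ('n, 'v) bf_label = Coin 'n | Const real | Leaf 'v

text \<open>A (possibly infinite) rooted binary tree is encoded as a labelling of all
  finite bit strings (node addresses); the actual tree consists of the addresses all of
  whose proper prefixes are internal nodes. Labels below leaves are irrelevant.\<close>
type_synonym ('n, 'v) bf_tree = "bool list \<Rightarrow> ('n, 'v) bf_label"

fun bf_internal :: "('n, 'v) bf_label \<Rightarrow> bool" where
  "bf_internal (Coin i) = True"
| "bf_internal (Const c) = True"
| "bf_internal (Leaf v) = False"

fun edge_prob :: "real ^ 'n \<Rightarrow> ('n, 'v) bf_label \<Rightarrow> bool \<Rightarrow> real" where
  "edge_prob x (Coin i) b = (if b then x $ i else 1 - x $ i)"
| "edge_prob x (Const c) b = (if b then c else 1 - c)"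
| "edge_prob x (Leaf v) b = 0"

definition bf_node :: "('n, 'v) bf_tree \<Rightarrow> bool list \<Rightarrow> bool" where
  "bf_node t w \<longleftrightarrow> (\<forall>j < length w. bf_internal (t (take j w)))"

definition reach_prob :: "('n, 'v) bf_tree \<Rightarrow> real ^ 'n \<Rightarrow> bool list \<Rightarrow> real" where
  "reach_prob t x w =
     (if bf_node t w then (\<Prod>j < length w. edge_prob x (t (take j w)) (w ! j)) else 0)"

text \<open>Pr[T(x) > d]: probability that the walk reaches depth d+1.\<close>
definition prob_T_gt :: "('n, 'v) bf_tree \<Rightarrow> real ^ 'n \<Rightarrow> nat \<Rightarrow> real" where
  "prob_T_gt t x d = (\<Sum>w \<in> {w. length w = Suc d}. reach_prob t x w)"

definition prob_T_eq :: "('n, 'v) bf_tree \<Rightarrow> real ^ 'n \<Rightarrow> nat \<Rightarrow> real" where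
  "prob_T_eq t x d = (\<Sum>w \<in> {w. length w = d}.
      (case t w of Leaf v \<Rightarrow> reach_prob t x w | _ \<Rightarrow> 0))"

definition exp_part :: "('n, 'v::real_vector) bf_tree \<Rightarrow> real ^ 'n \<Rightarrow> nat \<Rightarrow> 'v" where
  "exp_part t x d = (\<Sum>w \<in> {w. length w = d}.
      (case t w of Leaf v \<Rightarrow> reach_prob t x w *\<^sub>R v | _ \<Rightarrow> 0))"

definition bernoulli_factory :: "('n, 'v) bf_tree \<Rightarrow> 'v set \<Rightarrow> bool" where
  "bernoulli_factory t V \<longleftrightarrow>
     (\<forall>w. bf_node t w \<longrightarrow> (\<forall>c. t w = Const c \<longrightarrow> 0 < c \<and> c < 1)
                      \<and> (\<forall>v. t w = Leaf v \<longrightarrow> v \<in> V))"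

definition vertices :: "'a::real_vector set \<Rightarrow> 'a set" where
  "vertices P = {v. v extreme_point_of P}"

text \<open>Strong Bernoulli factory for polytope P: output set = vertex set of P, almost sure
  termination and E[F(x)] = x for every x in P.\<close>
definition strong_bernoulli_factory :: "('n, real ^ 'n) bf_tree \<Rightarrow> (real ^ 'n) set \<Rightarrow> bool" where
  "strong_bernoulli_factory t P \<longleftrightarrow>
     bernoulli_factory t (vertices P) \<and>
     (\<forall>x \<in> P. (prob_T_eq t x) sums 1 \<and> (exp_part t x) sums x)"

definition converges_exponentially :: "('n, 'v) bf_tree \<Rightarrow> (real ^ 'n) set \<Rightarrow> bool" where
  "converges_exponentially t S \<longleftrightarrow>
     (\<exists>c < 1. \<forall>d > 0. \<forall>x \<in> S. prob_T_gt t x d \<le> c ^ d)"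

definition P_kn :: "nat \<Rightarrow> (real ^ 'n) set" where
  "P_kn k = {x. (\<forall>i. 0 \<le> x $ i \<and> x $ i \<le> 1) \<and> (\<Sum>i\<in>UNIV. x $ i) = real k}"

end

theory Submission
  imports Defs
begin

lemma lists_Suc_eq: "{w::bool list. length w = Suc L} = (\<lambda>(u,b). u @ [b]) ` ({u. length u = L} \<times> UNIV)"
proof (rule set_eqI, rule iffI)
  fix w :: "bool list" assume "w \<in> {w. length w = Suc L}"
  then have "w = butlast w @ [last w]" "length (butlast w) = L"
    by (auto intro: append_butlast_last_id[symmetric])
  then show "w \<in> (\<lambda>(u,b). u @ [b]) ` ({u. length u = L} \<times> UNIV)"
    by (metis (mono_tags, lifting) SigmaI UNIV_I case_prod_conv image_eqI mem_Collect_eq)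
qed auto

lemma prod_paths_le:
  fixes q :: "nat \<Rightarrow> bool list \<Rightarrow> bool \<Rightarrow> real"
  assumes "\<And>j u b. j < L \<Longrightarrow> 0 \<le> q j u b"
    and "\<And>j u. j < L \<Longrightarrow> q j u True + q j u False \<le> s j"
  shows "(\<Sum>w\<in>{w. length w = L}. \<Prod>j<L. q j (take j w) (w!j)) \<le> (\<Prod>j<L. s j)"
  using assms
proof (induction L)
  case 0
  then show ?case by simp
next
  case (Suc L)
  define P where "P u = (\<Prod>j<L. q j (take j u) (u!j))" for u
  have Pnn: "0 \<le> P u" for u unfolding P_def using Suc.prems(1) by (auto intro: prod_nonneg)
  have sL: "0 \<le> s L" using Suc.prems(1)[of L "[]" True] Suc.prems(1)[of L "[]" False] Suc.prems(2)[of L "[]"]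
    by linarith
  have inj: "inj_on (\<lambda>(u,b). u @ [b]) ({u::bool list. length u = L} \<times> UNIV)"
    by (auto simp: inj_on_def)
  have eq: "(\<Prod>j<Suc L. q j (take j (u @ [b])) ((u @ [b])!j)) = P u * q L u b"
    if "length u = L" for u b
  proof -
    have "(\<Prod>j<L. q j (take j (u @ [b])) ((u @ [b])!j)) = P u"
      unfolding P_def using that by (intro prod.cong) (auto simp: nth_append)
    then show ?thesis using that by (simp add: prod.lessThan_Suc nth_append)
  qed
  have "(\<Sum>w\<in>{w. length w = Suc L}. \<Prod>j<Suc L. q j (take j w) (w!j))
      = (\<Sum>(u,b)\<in>{u::bool list. length u = L} \<times> UNIV. P u * q L u b)"
    unfolding lists_Suc_eq sum.reindex[OF inj] o_def
  proof (rule sum.cong[OF refl])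
    fix p assume "p \<in> {u::bool list. length u = L} \<times> (UNIV::bool set)"
    then obtain u b where p: "p = (u, b)" "length u = L" by auto
    show "(\<Prod>j<Suc L. q j (take j ((\<lambda>(u,b). u @ [b]) p)) (((\<lambda>(u,b). u @ [b]) p)!j)) = (case p of (u, b) \<Rightarrow> P u * q L u b)"
      unfolding p(1) case_prod_conv by (rule eq[OF p(2)])
  qed
  also have "\<dots> = (\<Sum>u\<in>{u::bool list. length u = L}. P u * (q L u True + q L u False))"
    by (subst sum.cartesian_product[symmetric]) (simp add: UNIV_bool algebra_simps)
  also have "\<dots> \<le> (\<Sum>u\<in>{u::bool list. length u = L}. P u * s L)"
    using Pnn Suc.prems(2)[of L] by (intro sum_mono mult_left_mono) auto
  also have "\<dots> = (\<Sum>u\<in>{u::bool list. length u = L}. P u) * s L"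
    by (simp add: sum_distrib_right)
  also have "\<dots> \<le> (\<Prod>j<L. s j) * s L"
    using Suc.IH Suc.prems sL unfolding P_def by (intro mult_right_mono) auto
  finally show ?case by (simp add: prod.lessThan_Suc)
qed


definition ep :: "('n, 'v) bf_tree \<Rightarrow> real ^ 'n \<Rightarrow> bool list \<Rightarrow> bool \<Rightarrow> real" where
  "ep t x u b = (if bf_node t u then edge_prob x (t u) b else 0)"

lemma node_take: "bf_node t w \<Longrightarrow> bf_node t (take j w)"
  unfolding bf_node_def by (auto simp: min_def)

lemma reach_ep: "reach_prob t x w = (\<Prod>j<length w. ep t x (take j w) (w!j))"
proof (cases "bf_node t w")
  case True
  then show ?thesis unfolding reach_prob_def ep_def
    by (auto intro!: prod.cong node_take)
next
  case False
  then have ex: "\<exists>j. j < length w \<and> \<not> bf_internal (t (take j w))"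
    unfolding bf_node_def by auto
  define j0 where "j0 = (LEAST j. j < length w \<and> \<not> bf_internal (t (take j w)))"
  have j0: "j0 < length w" "\<not> bf_internal (t (take j0 w))"
    using LeastI_ex[OF ex] unfolding j0_def by auto
  have "\<And>j. j < j0 \<Longrightarrow> bf_internal (t (take j w))"
    using not_less_Least j0(1) unfolding j0_def by (metis (mono_tags, lifting) order.strict_trans)
  then have nd: "bf_node t (take j0 w)"
    unfolding bf_node_def using j0(1) by (auto simp: min_def)
  obtain v where "t (take j0 w) = Leaf v" using j0(2) by (cases "t (take j0 w)") auto
  then have "ep t x (take j0 w) (w!j0) = 0" using nd unfolding ep_def by simp
  then have "(\<Prod>j<length w. ep t x (take j w) (w!j)) = 0"
    using j0(1) by (intro prod_zero) auto
  then show ?thesis using False unfolding reach_prob_def by simp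
qed

definition unitbox :: "(real ^ 'n) set" where
  "unitbox = {x. \<forall>i. 0 \<le> x $ i \<and> x $ i \<le> 1}"

lemma ep_nonneg:
  assumes "bernoulli_factory t V" "x \<in> unitbox"
  shows "0 \<le> ep t x u b"
proof (cases "bf_node t u")
  case True
  then show ?thesis using assms unfolding ep_def bernoulli_factory_def unitbox_def
    by (cases "t u") auto
qed (simp add: ep_def)

lemma ep_sum:
  assumes "bernoulli_factory t V" "x \<in> unitbox"
  shows "ep t x u True + ep t x u False \<le> 1"
proof (cases "bf_node t u")
  case True
  then show ?thesis using assms unfolding ep_def bernoulli_factory_def unitbox_def
    by (cases "t u") auto
qed (simp add: ep_def)

lemma reach_nonneg:
  assumes "bernoulli_factory t V" "x \<in> unitbox"
  shows "0 \<le> reach_prob t x w"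
  unfolding reach_ep using ep_nonneg[OF assms] by (intro prod_nonneg) auto

definition LS :: "('n, 'v) bf_tree \<Rightarrow> real ^ 'n \<Rightarrow> nat \<Rightarrow> ('v \<Rightarrow> real) \<Rightarrow> real" where
  "LS t x d g = (\<Sum>w\<in>{w. length w = d}.
      (case t w of Leaf V \<Rightarrow> reach_prob t x w * g V | Coin _ \<Rightarrow> 0 | Const _ \<Rightarrow> 0))"

lemma LS_eq: "prob_T_eq t x d = LS t x d (\<lambda>_. 1)"
  unfolding prob_T_eq_def LS_def
  by (intro sum.cong refl) (auto split: bf_label.split)

lemma LS_exp: "exp_part t x d $ l = LS t x d (\<lambda>V. V $ l)"
  unfolding exp_part_def LS_def sum_component
  by (intro sum.cong refl) (auto split: bf_label.split)

lemma LS_diff: "LS t x d (\<lambda>V. 1 - V $ l) = prob_T_eq t x d - exp_part t x d $ l"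
  unfolding LS_eq LS_exp LS_def sum_subtractf[symmetric]
  by (intro sum.cong refl) (auto split: bf_label.split simp: algebra_simps)

lemma P_unitbox: "P_kn k \<subseteq> unitbox"
  unfolding P_kn_def unitbox_def by auto

lemma vertices_sub: "vertices S \<subseteq> S"
  unfolding vertices_def extreme_point_of_def by auto

lemma sums_LS1:
  assumes "strong_bernoulli_factory t P" "y \<in> P"
  shows "(\<lambda>d. LS t y d (\<lambda>V. 1 - V $ l)) sums (1 - y $ l)"
  unfolding LS_diff using assms unfolding strong_bernoulli_factory_def
  by (intro sums_diff sums_vec_nth) auto

lemma sums_LS0:
  assumes "strong_bernoulli_factory t P" "y \<in> P"
  shows "(\<lambda>d. LS t y d (\<lambda>V. V $ l)) sums (y $ l)"
  unfolding LS_exp[symmetric] using assms unfolding strong_bernoulli_factory_def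
  by (intro sums_vec_nth) auto

lemma LS_zero:
  assumes bf: "bernoulli_factory t (vertices (P_kn k))" and y: "y \<in> P_kn k"
    and s: "(\<lambda>d. LS t y d g) sums 0"
    and gnn: "\<And>V. V \<in> P_kn k \<Longrightarrow> 0 \<le> g V"
    and tw: "t w = Leaf V" and r: "reach_prob t y w \<noteq> 0"
  shows "g V = 0"
proof -
  define tm where "tm w' = (case t w' of Leaf V \<Rightarrow> reach_prob t y w' * g V | Coin _ \<Rightarrow> 0 | Const _ \<Rightarrow> 0)" for w'
  have yb: "y \<in> unitbox" using y P_unitbox by auto
  have tnn: "0 \<le> tm w'" for w'
  proof (cases "reach_prob t y w' = 0")
    case False
    then have nd: "bf_node t w'" unfolding reach_prob_def by (auto split: if_splits)
    show ?thesis
    proof (cases "t w'")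
      case (Leaf V')
      then have "V' \<in> P_kn k" using bf nd vertices_sub unfolding bernoulli_factory_def by blast
      then show ?thesis using Leaf gnn reach_nonneg[OF bf yb] unfolding tm_def by simp
    qed (auto simp: tm_def)
  qed (auto simp: tm_def split: bf_label.split)
  have LSd: "LS t y d g = (\<Sum>w\<in>{w. length w = d}. tm w)" for d
    unfolding LS_def tm_def by simp
  have "\<forall>d. LS t y d g = 0"
    using s unfolding sums_iff by (subst suminf_eq_zero_iff[symmetric]) (auto simp: LSd tnn intro: sum_nonneg)
  then have "(\<Sum>w\<in>{w'. length w' = length w}. tm w) = 0" using LSd by metis
  then have "tm w = 0" using tnn by (subst (asm) sum_nonneg_eq_0_iff) (auto simp: finite_list_length)
  then show ?thesis using tw r unfolding tm_def by simp
qed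

lemma leaf_one:
  assumes sbf: "strong_bernoulli_factory t (P_kn k)" and y: "y \<in> P_kn k" and yl: "y $ l = 1"
    and tw: "t w = Leaf V" and r: "reach_prob t y w \<noteq> 0"
  shows "V $ l = 1"
proof -
  have s: "(\<lambda>d. LS t y d (\<lambda>V. 1 - V $ l)) sums 0" using sums_LS1[OF sbf y, of l] yl by simp
  have bf: "bernoulli_factory t (vertices (P_kn k))" using sbf by (simp add: strong_bernoulli_factory_def)
  have "1 - V $ l = 0"
    using LS_zero[OF bf y s _ tw r] by (auto simp: P_kn_def)
  then show ?thesis by simp
qed

lemma leaf_zero:
  assumes sbf: "strong_bernoulli_factory t (P_kn k)" and y: "y \<in> P_kn k" and yl: "y $ l = 0"
    and tw: "t w = Leaf V" and r: "reach_prob t y w \<noteq> 0"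
  shows "V $ l = 0"
proof -
  have s: "(\<lambda>d. LS t y d (\<lambda>V. V $ l)) sums 0" using sums_LS0[OF sbf y, of l] yl by simp
  have bf: "bernoulli_factory t (vertices (P_kn k))" using sbf by (simp add: strong_bernoulli_factory_def)
  show "V $ l = 0"
    using LS_zero[OF bf y s _ tw r] by (auto simp: P_kn_def)
qed


lemma edge_exists:
  assumes bf: "bernoulli_factory t V0" and nd: "bf_node t w" and r0: "reach_prob t y w = 0"
    and hy: "\<And>l. l \<noteq> i \<Longrightarrow> 0 < y $ l \<and> y $ l < 1"
  shows "\<exists>m<length w. t (take m w) = Coin i \<and> (if w!m then y $ i else 1 - y $ i) = 0"
proof -
  have "(\<Prod>m<length w. edge_prob y (t (take m w)) (w!m)) = 0"
    using r0 nd unfolding reach_prob_def by simp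
  then obtain m where m: "m < length w" "edge_prob y (t (take m w)) (w!m) = 0"
    by (auto simp: prod_zero_iff)
  have ndm: "bf_node t (take m w)" using nd by (rule node_take)
  have int: "bf_internal (t (take m w))" using nd m(1) unfolding bf_node_def by auto
  show ?thesis
  proof (cases "t (take m w)")
    case (Coin l)
    then have "l = i" using m(2) hy[of l] by (cases "w!m") auto
    then show ?thesis using Coin m by (auto split: if_splits)
  next
    case (Const c)
    then have "0 < c \<and> c < 1" using bf ndm unfolding bernoulli_factory_def by blast
    then show ?thesis using Const m(2) by (cases "w!m") auto
  next
    case (Leaf v)
    then show ?thesis using int by simp
  qed
qed

lemma tail_bound:
  assumes bf: "bernoulli_factory t V0" and xb: "x \<in> unitbox"
    and Vi: "\<And>w V. t w = Leaf V \<Longrightarrow> reach_prob t x w \<noteq> 0 \<Longrightarrow> 0 \<le> V $ i"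
  shows "LS t x (Suc d) (\<lambda>V. 1 - V $ i) \<le> prob_T_gt t x d"
  unfolding LS_def prob_T_gt_def
proof (rule sum_mono)
  fix w :: "bool list"
  have rn: "0 \<le> reach_prob t x w" by (rule reach_nonneg[OF bf xb])
  show "(case t w of Leaf V \<Rightarrow> reach_prob t x w * (1 - V $ i) | Coin _ \<Rightarrow> 0 | Const _ \<Rightarrow> 0) \<le> reach_prob t x w"
  proof (cases "t w")
    case (Leaf V)
    show ?thesis
    proof (cases "reach_prob t x w = 0")
      case False
      then have "0 \<le> V $ i" using Vi Leaf by blast
      then show ?thesis using Leaf rn by (simp add: mult_left_le)
    qed (simp add: Leaf)
  qed (use rn in auto)
qed

lemma main_bound:
  fixes x :: "real ^ 'n"
  assumes bf: "bernoulli_factory t V0" and xb: "x \<in> unitbox"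
    and ij: "i \<noteq> j" and xi: "x $ i = 1 - e" and xj: "x $ j = e"
    and key: "\<And>w V. t w = Leaf V \<Longrightarrow> reach_prob t x w \<noteq> 0 \<Longrightarrow> V $ i < 1 \<Longrightarrow>
       \<exists>m<length w. \<exists>m'<length w. t (take m w) = Coin i \<and> \<not> w!m \<and> t (take m' w) = Coin j \<and> w!m'"
    and Vi: "\<And>w V. t w = Leaf V \<Longrightarrow> reach_prob t x w \<noteq> 0 \<Longrightarrow> 0 \<le> V $ i"
  shows "LS t x d (\<lambda>V. 1 - V $ i) \<le> real d ^ 2 * e ^ 2"
proof -
  have e0: "0 \<le> e" using xb xj unfolding unitbox_def by force
  define Pd where "Pd = {p \<in> {..<d} \<times> {..<d}. fst p \<noteq> snd p}"
  define qq where "qq p l u b = ep t x u b * (if l = fst p then (if t u = Coin i \<and> \<not> b then 1 else 0)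
      else if l = snd p then (if t u = Coin j \<and> b then 1 else 0) else 1)" for p :: "nat \<times> nat" and l u b
  define Q where "Q p w = (\<Prod>l<d. qq p l (take l w) (w!l))" for p w
  have qqnn: "0 \<le> qq p l u b" for p l u b
    unfolding qq_def using ep_nonneg[OF bf xb] by auto
  have Qnn: "0 \<le> Q p w" for p w unfolding Q_def using qqnn by (intro prod_nonneg) auto
  have finPd: "finite Pd" unfolding Pd_def by auto
  have rn: "0 \<le> reach_prob t x w" for w by (rule reach_nonneg[OF bf xb])
  define tm where "tm w = (case t w of Leaf V \<Rightarrow> reach_prob t x w * (1 - V $ i) | Coin _ \<Rightarrow> 0 | Const _ \<Rightarrow> 0)" for w
  have step1: "tm w \<le> (\<Sum>p\<in>Pd. Q p w)" if lw: "length w = d" for w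
  proof -
    have S0: "0 \<le> (\<Sum>p\<in>Pd. Q p w)" using Qnn by (intro sum_nonneg) auto
    show ?thesis
    proof (cases "t w")
      case (Leaf V)
      show ?thesis
      proof (cases "reach_prob t x w \<noteq> 0 \<and> V $ i < 1")
        case True
        then obtain m m' where mm: "m < length w" "m' < length w" "t (take m w) = Coin i" "\<not> w!m"
          "t (take m' w) = Coin j" "w!m'" using key[OF Leaf] by blast
        have mne: "m \<noteq> m'" using mm ij by auto
        have pin: "(m, m') \<in> Pd" unfolding Pd_def using mm lw mne by auto
        have "Q (m, m') w = (\<Prod>l<d. ep t x (take l w) (w!l))"
          unfolding Q_def qq_def using mm by (intro prod.cong refl) auto
        also have "\<dots> = reach_prob t x w" using lw by (simp add: reach_ep)
        finally have Qr: "Q (m, m') w = reach_prob t x w" .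
        have "tm w \<le> reach_prob t x w"
          using Leaf Vi[OF Leaf] True rn unfolding tm_def by (simp add: mult_left_le)
        also have "\<dots> \<le> (\<Sum>p\<in>Pd. Q p w)" unfolding Qr[symmetric]
          using finPd pin Qnn by (intro member_le_sum) auto
        finally show ?thesis .
      next
        case False
        then have "tm w \<le> 0" using Leaf rn unfolding tm_def
          by (auto intro: mult_nonneg_nonpos)
        then show ?thesis using S0 by linarith
      qed
    qed (use S0 in \<open>auto simp: tm_def\<close>)
  qed
  have step2: "(\<Sum>w\<in>{w. length w = d}. Q p w) \<le> e ^ 2" if p: "p \<in> Pd" for p
  proof -
    define s where "s l = (if l = fst p then e else if l = snd p then e else 1)" for l
    have "(\<Sum>w\<in>{w. length w = d}. Q p w) \<le> (\<Prod>l<d. s l)"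
      unfolding Q_def
    proof (rule prod_paths_le)
      fix l u b show "0 \<le> qq p l u b" by (rule qqnn)
    next
      fix l u
      show "qq p l u True + qq p l u False \<le> s l"
      proof -
        have epn: "0 \<le> ep t x u b" for b by (rule ep_nonneg[OF bf xb])
        consider "l = fst p" | "l \<noteq> fst p" "l = snd p" | "l \<noteq> fst p" "l \<noteq> snd p" by blast
        then show ?thesis
        proof cases
          case 1
          then show ?thesis unfolding qq_def s_def using e0 xi epn
            by (auto simp: ep_def)
        next
          case 2
          then show ?thesis unfolding qq_def s_def using e0 xj epn ij
            by (auto simp: ep_def)
        next
          case 3
          then show ?thesis unfolding qq_def s_def using ep_sum[OF bf xb] by auto
        qed
      qed
    qed
    also have "(\<Prod>l<d. s l) = e ^ 2"
    proof -
      have a: "fst p \<in> {..<d}" "snd p \<in> {..<d} - {fst p}" using p unfolding Pd_def by auto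
      have "(\<Prod>l<d. s l) = s (fst p) * (\<Prod>l\<in>{..<d} - {fst p}. s l)"
        using a by (intro prod.remove) auto
      also have "(\<Prod>l\<in>{..<d} - {fst p}. s l) = s (snd p) * (\<Prod>l\<in>{..<d} - {fst p} - {snd p}. s l)"
        using a by (intro prod.remove) auto
      also have "(\<Prod>l\<in>{..<d} - {fst p} - {snd p}. s l) = 1"
        by (intro prod.neutral) (auto simp: s_def)
      finally show ?thesis using a by (auto simp: s_def power2_eq_square)
    qed
    finally show ?thesis .
  qed
  have "LS t x d (\<lambda>V. 1 - V $ i) = (\<Sum>w\<in>{w. length w = d}. tm w)"
    unfolding LS_def tm_def by simp
  also have "\<dots> \<le> (\<Sum>w\<in>{w. length w = d}. \<Sum>p\<in>Pd. Q p w)"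
    using step1 by (intro sum_mono) auto
  also have "\<dots> = (\<Sum>p\<in>Pd. \<Sum>w\<in>{w. length w = d}. Q p w)"
    by (rule sum.swap)
  also have "\<dots> \<le> (\<Sum>p\<in>Pd. e ^ 2)"
    using step2 by (intro sum_mono) auto
  also have "\<dots> = real (card Pd) * e ^ 2" by simp
  also have "\<dots> \<le> real d ^ 2 * e ^ 2"
  proof -
    have "card Pd \<le> card ({..<d} \<times> {..<d})" unfolding Pd_def by (intro card_mono) auto
    then have "card Pd \<le> d * d" by (simp add: card_cartesian_product)
    then have "real (card Pd) \<le> real (d * d)" by (simp only: of_nat_le_iff)
    then have "real (card Pd) \<le> real d ^ 2" by (simp add: power2_eq_square)
    then show ?thesis by (intro mult_right_mono) auto
  qed
  finally show ?thesis .
qed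


lemma sum_two:
  fixes f :: "'n::finite \<Rightarrow> real"
  assumes "i \<noteq> j"
  shows "(\<Sum>l\<in>UNIV. f l) = f i + f j + (\<Sum>l\<in>UNIV - {i, j}. f l)"
proof -
  have "(\<Sum>l\<in>UNIV. f l) = f i + (\<Sum>l\<in>UNIV - {i}. f l)" by (intro sum.remove) auto
  also have "(\<Sum>l\<in>UNIV - {i}. f l) = f j + (\<Sum>l\<in>UNIV - {i} - {j}. f l)"
    using assms by (intro sum.remove) auto
  also have "UNIV - {i} - {j} = UNIV - {i, j}" by auto
  finally show ?thesis by simp
qed

lemma sum_one:
  fixes a :: real
  shows "(\<Sum>l\<in>(UNIV::'n::finite set). if l = i then b else a) = b + real (CARD('n) - 1) * a"
proof -
  have "(\<Sum>l\<in>(UNIV::'n set). if l = i then b else a) = (if i = i then b else a) + (\<Sum>l\<in>UNIV - {i}. if l = i then b else a)"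
    by (intro sum.remove) auto
  also have "(\<Sum>l\<in>UNIV - {i}. if l = i then b else a) = (\<Sum>l\<in>UNIV - {i}. a)"
    by (intro sum.cong) auto
  also have "\<dots> = real (CARD('n) - 1) * a" by (simp add: card_Diff_singleton)
  finally show ?thesis by simp
qed

lemma small_D:
  fixes c \<delta> :: real
  assumes "0 \<le> c" "c < 1" "0 < \<delta>"
  shows "\<exists>m\<ge>1. real (Suc m) ^ 3 * c ^ m < \<delta>"
proof -
  define c1 where "c1 = root 3 c"
  have c1: "0 \<le> c1" "c1 < 1" "c1 ^ 3 = c" unfolding c1_def using assms by (auto simp: real_root_pow_pos2)
  have "(\<lambda>n. of_nat n * c1 ^ n) \<longlonglongrightarrow> (0::real)"
    by (rule powser_times_n_limit_0) (use c1 in auto)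
  then have lim3: "(\<lambda>n. (of_nat n * c1 ^ n) ^ 3) \<longlonglongrightarrow> (0::real)"
    using tendsto_power[of "\<lambda>n. of_nat n * c1 ^ n" 0 sequentially 3] by simp
  have "eventually (\<lambda>n. (of_nat n * c1 ^ n) ^ 3 < \<delta> / 8) sequentially"
    by (rule order_tendstoD(2)[OF lim3]) (use assms in simp)
  then obtain N where N: "\<And>n. n \<ge> N \<Longrightarrow> (of_nat n * c1 ^ n) ^ 3 < \<delta> / 8"
    by (auto simp: eventually_sequentially)
  define m where "m = max N 1"
  have m1: "m \<ge> 1" and mN: "m \<ge> N" unfolding m_def by auto
  have eq: "(of_nat m * c1 ^ m) ^ 3 = real m ^ 3 * c ^ m"
    using c1(3) by (simp add: power_mult_distrib power_mult[symmetric] mult.commute[of m 3] power_mult)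
  have "real (Suc m) ^ 3 \<le> (2 * real m) ^ 3"
    using m1 by (intro power_mono) auto
  then have "real (Suc m) ^ 3 * c ^ m \<le> (2 * real m) ^ 3 * c ^ m"
    using assms by (intro mult_right_mono) auto
  also have "\<dots> = 8 * (real m ^ 3 * c ^ m)" by (simp add: power_mult_distrib)
  also have "\<dots> < \<delta>" using N[OF mN] eq by simp
  finally show ?thesis using m1 by blast
qed


theorem theorem7p1:
  fixes k :: nat
  assumes "1 < k" and "k + 1 < CARD('n)"
  shows "\<not> (\<exists>t :: ('n::finite, real ^ 'n) bf_tree.
            strong_bernoulli_factory t (P_kn k) \<and> converges_exponentially t (P_kn k))"
proof
  assume "\<exists>t :: ('n::finite, real ^ 'n) bf_tree.
            strong_bernoulli_factory t (P_kn k) \<and> converges_exponentially t (P_kn k)"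
  then obtain t :: "('n, real ^ 'n) bf_tree" where sbf: "strong_bernoulli_factory t (P_kn k)"
    and ce: "converges_exponentially t (P_kn k)" by blast
  obtain c where c1: "c < 1" and cb: "\<And>d x. d > 0 \<Longrightarrow> x \<in> P_kn k \<Longrightarrow> prob_T_gt t x d \<le> c ^ d"
    using ce unfolding converges_exponentially_def by blast
  have bf: "bernoulli_factory t (vertices (P_kn k))"
    using sbf unfolding strong_bernoulli_factory_def by blast
  define n where "n = CARD('n)"
  have nk: "k + 1 < n" "1 < k" using assms unfolding n_def by auto
  obtain i :: 'n where True by blast
  have ci: "card (UNIV - {i}) = n - 1" unfolding n_def by (simp add: card_Diff_singleton)
  have "UNIV - {i} \<noteq> {}"
  proof
    assume "UNIV - {i} = {}"
    then have "card (UNIV - {i}) = 0" by (simp only: card.empty)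
    with ci nk show False by simp
  qed
  then obtain j where "j \<in> UNIV - {i}" by blast
  then have ij: "i \<noteq> j" by blast
  have cR: "card (UNIV - {i, j}) = n - 2"
    unfolding n_def using ij by (subst card_Diff_subset) auto
  have "k - 1 \<le> card (UNIV - {i, j})" using cR nk by simp
  then obtain A where A: "A \<subseteq> UNIV - {i, j}" "card A = k - 1" "finite A"
    by (rule obtain_subset_with_card_n)
  have rn1: "real (n - 1) = real n - 1" using nk by auto
  have n1pos: "real n - 1 > 0" using nk by auto
  define y1 :: "real ^ 'n" where "y1 = (\<chi> l. if l = i then 1 else (real k - 1) / (real n - 1))"
  define y2 :: "real ^ 'n" where "y2 = (\<chi> l. if l = j then 0 else real k / (real n - 1))"
  have fr1: "0 < (real k - 1) / (real n - 1)" "(real k - 1) / (real n - 1) < 1"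
    using nk n1pos by (auto simp: field_simps)
  have fr2: "0 < real k / (real n - 1)" "real k / (real n - 1) < 1"
    using nk n1pos by (auto simp: field_simps)
  have y1P: "y1 \<in> P_kn k"
  proof -
    have "(\<Sum>l\<in>UNIV. y1 $ l) = 1 + real (n - 1) * ((real k - 1) / (real n - 1))"
      unfolding y1_def n_def by (simp add: sum_one)
    also have "\<dots> = real k" using rn1 n1pos by simp
    finally show ?thesis unfolding P_kn_def using fr1 by (auto simp: y1_def)
  qed
  have y2P: "y2 \<in> P_kn k"
  proof -
    have "(\<Sum>l\<in>UNIV. y2 $ l) = 0 + real (n - 1) * (real k / (real n - 1))"
      unfolding y2_def n_def by (simp add: sum_one)
    also have "\<dots> = real k" using rn1 n1pos by simp
    finally show ?thesis unfolding P_kn_def using fr2 by (auto simp: y2_def)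
  qed
  have c0: "0 \<le> c"
  proof -
    have "0 \<le> prob_T_gt t y1 1" unfolding prob_T_gt_def
      using reach_nonneg[OF bf] y1P P_unitbox by (intro sum_nonneg) auto
    also have "\<dots> \<le> c ^ 1" using cb[OF _ y1P, of 1] by simp
    finally show ?thesis by simp
  qed
  obtain m where m1: "m \<ge> 1" and mD: "real (Suc m) ^ 3 * c ^ m < 3 * (1 - c) / 16"
    using small_D[OF c0 c1, of "3 * (1 - c) / 16"] c1 by auto
  define D where "D = Suc m"
  define K where "K = real D ^ 3"
  have Kpos: "K > 0" unfolding K_def D_def by simp
  define e where "e = 1 / (4 * K)"
  have Kge: "K \<ge> 1" unfolding K_def D_def by simp
  have e0: "0 < e" "e < 1" unfolding e_def using Kge by (auto simp: field_simps)
  define x :: "real ^ 'n" where "x = (\<chi> l. if l = i then 1 - e else if l = j then e else if l \<in> A then 1 else 0)"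
  have xi: "x $ i = 1 - e" and xj: "x $ j = e" unfolding x_def using ij by auto
  have xP: "x \<in> P_kn k"
  proof -
    have "(\<Sum>l\<in>UNIV. x $ l) = x $ i + x $ j + (\<Sum>l\<in>UNIV - {i, j}. x $ l)" by (rule sum_two[OF ij])
    also have "(\<Sum>l\<in>UNIV - {i, j}. x $ l) = (\<Sum>l\<in>UNIV - {i, j}. if l \<in> A then 1 else 0)"
      unfolding x_def by (intro sum.cong) auto
    also have "\<dots> = (\<Sum>l\<in>(UNIV - {i, j}) \<inter> A. 1)" by (subst sum.inter_restrict) auto
    also have "(UNIV - {i, j}) \<inter> A = A" using A by auto
    finally have "(\<Sum>l\<in>UNIV. x $ l) = real k" using xi xj A nk by simp
    then show ?thesis unfolding P_kn_def using e0 by (auto simp: x_def)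
  qed
  have xb: "x \<in> unitbox" using xP P_unitbox by auto
  have Vin: "V \<in> P_kn k" if "t w = Leaf V" "reach_prob t x w \<noteq> 0" for w V
  proof -
    have "bf_node t w" using that(2) unfolding reach_prob_def by (auto split: if_splits)
    then show ?thesis using bf that(1) vertices_sub unfolding bernoulli_factory_def by blast
  qed
  have Vi: "0 \<le> V $ i" if "t w = Leaf V" "reach_prob t x w \<noteq> 0" for w V
    using Vin[OF that] unfolding P_kn_def by auto
  have key: "\<exists>m<length w. \<exists>m'<length w. t (take m w) = Coin i \<and> \<not> w!m \<and> t (take m' w) = Coin j \<and> w!m'"
    if tw: "t w = Leaf V" and r: "reach_prob t x w \<noteq> 0" and Vl: "V $ i < 1" for w V
  proof -
    have nd: "bf_node t w" using r unfolding reach_prob_def by (auto split: if_splits)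
    have VP: "V \<in> P_kn k" by (rule Vin[OF tw r])
    have Voth: "V $ l = x $ l" if "l \<in> UNIV - {i, j}" for l
    proof (cases "l \<in> A")
      case True
      then have "x $ l = 1" using that unfolding x_def by auto
      then show ?thesis using leaf_one[OF sbf xP _ tw r] by simp
    next
      case False
      then have "x $ l = 0" using that unfolding x_def by auto
      then show ?thesis using leaf_zero[OF sbf xP _ tw r] by simp
    qed
    have "V $ i + V $ j + (\<Sum>l\<in>UNIV - {i, j}. V $ l) = x $ i + x $ j + (\<Sum>l\<in>UNIV - {i, j}. x $ l)"
      using VP xP unfolding P_kn_def sum_two[OF ij] by simp
    moreover have "(\<Sum>l\<in>UNIV - {i, j}. V $ l) = (\<Sum>l\<in>UNIV - {i, j}. x $ l)"
      using Voth by (intro sum.cong) auto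
    ultimately have Vij: "V $ i + V $ j = 1" using xi xj by simp
    have r1: "reach_prob t y1 w = 0"
    proof (rule ccontr)
      assume "reach_prob t y1 w \<noteq> 0"
      then have "V $ i = 1" using leaf_one[OF sbf y1P _ tw] by (simp add: y1_def)
      then show False using Vl by simp
    qed
    obtain m where m: "m < length w" "t (take m w) = Coin i" "(if w!m then y1 $ i else 1 - y1 $ i) = 0"
      using edge_exists[OF bf nd r1, of i] fr1 by (auto simp: y1_def)
    have r2: "reach_prob t y2 w = 0"
    proof (rule ccontr)
      assume "reach_prob t y2 w \<noteq> 0"
      then have "V $ j = 0" using leaf_zero[OF sbf y2P _ tw] by (simp add: y2_def)
      then show False using Vl Vij by simp
    qed
    obtain m' where m': "m' < length w" "t (take m' w) = Coin j" "(if w!m' then y2 $ j else 1 - y2 $ j) = 0"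
      using edge_exists[OF bf nd r2, of j] fr2 by (auto simp: y2_def)
    have "\<not> w!m" using m(3) by (auto simp: y1_def split: if_splits)
    moreover have "w!m'" using m'(3) by (auto simp: y2_def split: if_splits)
    ultimately show ?thesis using m m' by blast
  qed
  define a where "a d = LS t x d (\<lambda>V. 1 - V $ i)" for d
  have as: "a sums e" unfolding a_def using sums_LS1[OF sbf xP, of i] xi by simp
  have ab1: "a d \<le> real d ^ 2 * e ^ 2" for d
    unfolding a_def by (rule main_bound[OF bf xb ij xi xj key Vi])
  have ab2: "a (Suc d) \<le> c ^ d" if "d \<ge> 1" for d
  proof -
    have "a (Suc d) \<le> prob_T_gt t x d" unfolding a_def by (rule tail_bound[OF bf xb Vi])
    also have "\<dots> \<le> c ^ d" using cb[OF _ xP, of d] that by simp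
    finally show ?thesis .
  qed
  have suma: "summable a" using as by (simp add: sums_iff)
  have "e = (\<Sum>d. a (d + D)) + sum a {..<D}"
    using as suminf_split_initial_segment[OF suma, of D] by (simp add: sums_iff)
  moreover have "sum a {..<D} \<le> K * e ^ 2"
  proof -
    have "sum a {..<D} \<le> (\<Sum>d<D. real D ^ 2 * e ^ 2)"
    proof (rule sum_mono)
      fix d assume "d \<in> {..<D}"
      then have "real d ^ 2 \<le> real D ^ 2" by (intro power_mono) auto
      then have "real d ^ 2 * e ^ 2 \<le> real D ^ 2 * e ^ 2" by (intro mult_right_mono) auto
      then show "a d \<le> real D ^ 2 * e ^ 2" using ab1[of d] by linarith
    qed
    also have "\<dots> = K * e ^ 2" unfolding K_def by (simp add: power_def)
    finally show ?thesis .
  qed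
  moreover have "(\<Sum>d. a (d + D)) \<le> c ^ m / (1 - c)"
  proof -
    have sg: "summable (\<lambda>d. c ^ m * c ^ d)" using c0 c1 by (intro summable_mult summable_geometric) auto
    have "(\<Sum>d. a (d + D)) \<le> (\<Sum>d. c ^ m * c ^ d)"
    proof (rule suminf_le)
      fix d
      have "a (d + D) = a (Suc (d + m))" unfolding D_def by simp
      also have "\<dots> \<le> c ^ (d + m)" using ab2[of "d + m"] m1 by simp
      finally show "a (d + D) \<le> c ^ m * c ^ d" by (simp add: power_add mult.commute)
    next
      show "summable (\<lambda>d. a (d + D))" using suma by (simp add: summable_iff_shift)
    qed (rule sg)
    also have "\<dots> = c ^ m * (1 / (1 - c))"
      using c0 c1 by (subst suminf_mult) (auto simp: suminf_geometric)
    finally show ?thesis by simp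
  qed
  moreover have "K * e ^ 2 = e / 4" unfolding e_def using Kpos by (simp add: field_simps power2_eq_square)
  moreover have "c ^ m / (1 - c) < 3 * e / 4"
  proof -
    have "K * c ^ m < 3 * (1 - c) / 16" using mD unfolding K_def D_def by simp
    then have "16 * K * c ^ m < 3 * (1 - c)" by simp
    then show ?thesis unfolding e_def using Kpos c1 by (simp add: field_simps)
  qed
  ultimately show False by linarith
qed

end
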